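(* In the setting of one non-elite offspring of the GA with proportional selection, uniform crossover and uniform mutation with rate $\pi_m\in(0,1/2]$, for every schema $H$, $$\alpha(H,t)\ge(1-\pi_m)^{\mathrm{ord}(H)}\alpha_{sel}(H,t)^2+2^{-\mathrm{ord}(H)}\alpha_{sel}(H,t)\big[1-\alpha_{sel}(H,t)\big]+\big[1-\alpha_{sel}(H,t)\big]^2\pi_m^{\mathrm{ord}(H)}.$$
   Context: Current population $\Psi(t)=(u^1,\dots,u^K)$, a list of $K$ elements of $\{0,1\}^d$, with fitness $f$. One offspring is generated by: drawing two parent indices $k,l$ independently, each equal to $j$ with probability $w_j=\exp(f(u^j)/2)/\sum_{i=1}^K\exp(f(u^i)/2)$; forming a child $c$ with $c_j=u^k_j$ or $u^l_j$ with probability $1/2$ each, independently over $j$; flipping each coordinate of $c$ independently with probability $\pi_m$. A schema is $H\in\{0,1,*\}^d$; fixed positions are those $j$ with $H_j\neq*$, $\mathrm{ord}(H)$ is their number; $u$ matches $H$ if $u_j=H_j$ at all fixed positions; ${\uparrow}(H)$ is the set of models matching $H$. $\alpha(H,t)$ is the probability that the offspring matches $H$, and $\alpha_{sel}(H,t)=\sum_{k:u^k\in{\uparrow}(H)}w_k$. *)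

theory Defs
  imports Complex_Main
begin

(* Models in {0,1}^d are functions nat => bool (only coordinates j < d matter).
   A schema H in {0,1,star}^d is a function nat => bool option (None = star),
   only positions j < d matter. A population of size K is u :: nat => (nat => bool),
   indexed by k < K. *)

definition fixed_pos :: "nat \<Rightarrow> (nat \<Rightarrow> bool option) \<Rightarrow> nat set" where
  "fixed_pos d H = {j. j < d \<and> H j \<noteq> None}"

definition ord_schema :: "nat \<Rightarrow> (nat \<Rightarrow> bool option) \<Rightarrow> nat" where
  "ord_schema d H = card (fixed_pos d H)"

definition matches :: "nat \<Rightarrow> (nat \<Rightarrow> bool option) \<Rightarrow> (nat \<Rightarrow> bool) \<Rightarrow> bool" where
  "matches d H x \<longleftrightarrow> (\<forall>j \<in> fixed_pos d H. H j = Some (x j))"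

definition sel_weight :: "((nat \<Rightarrow> bool) \<Rightarrow> real) \<Rightarrow> nat \<Rightarrow> (nat \<Rightarrow> nat \<Rightarrow> bool) \<Rightarrow> nat \<Rightarrow> real" where
  "sel_weight f K u k = exp (f (u k) / 2) / (\<Sum>i<K. exp (f (u i) / 2))"

definition child :: "(nat \<Rightarrow> bool) \<Rightarrow> (nat \<Rightarrow> bool) \<Rightarrow> nat set \<Rightarrow> nat set \<Rightarrow> nat \<Rightarrow> bool" where
  "child a b S M = (\<lambda>j. (if j \<in> S then a j else b j) \<noteq> (j \<in> M))"

(* alpha(H,t): probability that one offspring matches H. *)
definition alpha :: "nat \<Rightarrow> real \<Rightarrow> ((nat \<Rightarrow> bool) \<Rightarrow> real) \<Rightarrow> nat \<Rightarrow> (nat \<Rightarrow> nat \<Rightarrow> bool)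
    \<Rightarrow> (nat \<Rightarrow> bool option) \<Rightarrow> real" where
  "alpha d pm f K u H =
     (\<Sum>k<K. \<Sum>l<K. sel_weight f K u k * sel_weight f K u l *
        (\<Sum>S\<in>Pow {..<d}. \<Sum>M\<in>Pow {..<d}.
           (1/2) ^ d * pm ^ card M * (1 - pm) ^ (d - card M) *
           (if matches d H (child (u k) (u l) S M) then 1 else 0)))"

definition alpha_sel :: "nat \<Rightarrow> ((nat \<Rightarrow> bool) \<Rightarrow> real) \<Rightarrow> nat \<Rightarrow> (nat \<Rightarrow> nat \<Rightarrow> bool)
    \<Rightarrow> (nat \<Rightarrow> bool option) \<Rightarrow> real" where
  "alpha_sel d f K u H = (\<Sum>k\<in>{k. k < K \<and> matches d H (u k)}. sel_weight f K u k)"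

end

theory Submission imports Defs begin

lemma prod_pow1:
  fixes h :: "'a \<Rightarrow> bool \<Rightarrow> real"
  assumes "finite A"
  shows "(\<Prod>x\<in>A. h x True + h x False) = (\<Sum>X\<in>Pow A. \<Prod>x\<in>A. h x (x \<in> X))"
proof -
  have "(\<Prod>x\<in>A. h x True + h x False) = (\<Sum>X\<in>Pow A. (\<Prod>x\<in>X. h x True) * (\<Prod>x\<in>A-X. h x False))"
    by (rule prod_add[OF assms])
  also have "\<dots> = (\<Sum>X\<in>Pow A. \<Prod>x\<in>A. h x (x \<in> X))"
  proof (rule sum.cong)
    fix X assume X: "X \<in> Pow A"
    have "(\<Prod>x\<in>A. h x (x \<in> X)) = (\<Prod>x\<in>A. if x \<in> X then h x True else h x False)"
      by (rule prod.cong) auto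
    also have "\<dots> = (\<Prod>x\<in>A \<inter> {x. x \<in> X}. h x True) * (\<Prod>x\<in>A \<inter> - {x. x \<in> X}. h x False)"
      by (rule prod.If_cases[OF assms])
    also have "A \<inter> {x. x \<in> X} = X" using X by auto
    also have "A \<inter> - {x. x \<in> X} = A - X" by auto
    finally show "(\<Prod>x\<in>X. h x True) * (\<Prod>x\<in>A-X. h x False) = (\<Prod>x\<in>A. h x (x \<in> X))" by simp
  qed simp
  finally show ?thesis .
qed

lemma prod_pow2:
  fixes h :: "'a \<Rightarrow> bool \<Rightarrow> bool \<Rightarrow> real"
  assumes "finite A"
  shows "(\<Sum>S\<in>Pow A. \<Sum>M\<in>Pow A. \<Prod>x\<in>A. h x (x \<in> S) (x \<in> M)) =
    (\<Prod>x\<in>A. h x True True + h x True False + (h x False True + h x False False))"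
proof -
  have "(\<Sum>S\<in>Pow A. \<Sum>M\<in>Pow A. \<Prod>x\<in>A. h x (x \<in> S) (x \<in> M)) =
     (\<Sum>S\<in>Pow A. \<Prod>x\<in>A. h x (x \<in> S) True + h x (x \<in> S) False)"
    by (rule sum.cong[OF refl], rule prod_pow1[OF assms, symmetric])
  also have "\<dots> = (\<Prod>x\<in>A. h x True True + h x True False + (h x False True + h x False False))"
    using prod_pow1[OF assms, of "\<lambda>x s. h x s True + h x s False"] by (simp add: add.assoc)
  finally show ?thesis .
qed

definition hh :: "nat \<Rightarrow> (nat \<Rightarrow> bool option) \<Rightarrow> real \<Rightarrow> (nat \<Rightarrow> bool) \<Rightarrow> (nat \<Rightarrow> bool) \<Rightarrow> nat \<Rightarrow> bool \<Rightarrow> bool \<Rightarrow> real" where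
  "hh d H pm a b j s m = 1/2 * (if m then pm else 1 - pm) *
     (if j \<in> fixed_pos d H then (if H j = Some ((if s then a j else b j) \<noteq> m) then 1 else 0) else 1)"

definition PP :: "nat \<Rightarrow> (nat \<Rightarrow> bool option) \<Rightarrow> real \<Rightarrow> (nat \<Rightarrow> bool) \<Rightarrow> (nat \<Rightarrow> bool) \<Rightarrow> real" where
  "PP d H pm a b = (\<Sum>S\<in>Pow {..<d}. \<Sum>M\<in>Pow {..<d}.
           (1/2) ^ d * pm ^ card M * (1 - pm) ^ (d - card M) *
           (if matches d H (child a b S M) then 1 else 0))"

lemma term_eq:
  assumes "M \<subseteq> {..<d}"
  shows "(1/2) ^ d * pm ^ card M * (1 - pm) ^ (d - card M) *
           (if matches d H (child a b S M) then 1 else 0) =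
         (\<Prod>j\<in>{..<d}. hh d H pm a b j (j \<in> S) (j \<in> M))"
proof -
  let ?D = "{..<d::nat}"
  have fD: "fixed_pos d H \<subseteq> ?D" unfolding fixed_pos_def by auto
  have e1: "(\<Prod>j\<in>?D. (1/2::real)) = (1/2)^d" by simp
  have "(\<Prod>j\<in>?D. if j \<in> M then pm else 1 - pm) =
      (\<Prod>j\<in>?D \<inter> {j. j \<in> M}. pm) * (\<Prod>j\<in>?D \<inter> - {j. j \<in> M}. 1 - pm)"
    by (rule prod.If_cases) simp
  also have "?D \<inter> {j. j \<in> M} = M" using assms by auto
  also have "?D \<inter> - {j. j \<in> M} = ?D - M" by auto
  finally have e2: "(\<Prod>j\<in>?D. if j \<in> M then pm else 1 - pm) = pm ^ card M * (1 - pm) ^ (d - card M)"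
    using assms by (simp add: card_Diff_subset finite_subset)
  have e3: "(\<Prod>j\<in>?D. (if j \<in> fixed_pos d H then (if H j = Some ((if j \<in> S then a j else b j) \<noteq> (j \<in> M)) then 1 else 0) else 1::real))
      = (if matches d H (child a b S M) then 1 else 0)"
  proof (cases "matches d H (child a b S M)")
    case True
    then show ?thesis by (auto simp: matches_def child_def intro!: prod.neutral)
  next
    case False
    then obtain j where j: "j \<in> fixed_pos d H" "H j \<noteq> Some (child a b S M j)"
      unfolding matches_def by auto
    have "j \<in> ?D" using j fD by auto
    then show ?thesis using False j
      by (intro trans[OF prod_zero]) (auto simp: child_def intro!: bexI[of _ j])
  qed
  show ?thesis
    unfolding hh_def prod.distrib e1 e2 e3 by (simp add: mult.assoc)
qed

lemma PP_eq: "PP d H pm a b = (\<Prod>j\<in>{..<d}. hh d H pm a b j True True + hh d H pm a b j True False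
     + (hh d H pm a b j False True + hh d H pm a b j False False))"
proof -
  have "PP d H pm a b = (\<Sum>S\<in>Pow {..<d}. \<Sum>M\<in>Pow {..<d}. \<Prod>j\<in>{..<d}. hh d H pm a b j (j \<in> S) (j \<in> M))"
    unfolding PP_def by (intro sum.cong refl term_eq) auto
  also note prod_pow2[OF finite_lessThan]
  finally show ?thesis .
qed


definition QQ where "QQ d H pm a b j = hh d H pm a b j True True + hh d H pm a b j True False
     + (hh d H pm a b j False True + hh d H pm a b j False False)"

lemma QQ_out: "j \<notin> fixed_pos d H \<Longrightarrow> QQ d H pm a b j = 1"
  unfolding QQ_def hh_def by simp

lemma QQ_bounds:
  assumes "0 < pm" "pm \<le> 1/2" "j \<in> fixed_pos d H"
  shows "pm \<le> QQ d H pm a b j"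
    "matches d H a \<or> matches d H b \<Longrightarrow> 1/2 \<le> QQ d H pm a b j"
    "matches d H a \<Longrightarrow> matches d H b \<Longrightarrow> 1 - pm \<le> QQ d H pm a b j"
proof -
  obtain v where v: "H j = Some v" using assms(3) unfolding fixed_pos_def by auto
  have Q: "QQ d H pm a b j = 1/2 * ((if a j = v then 1 - pm else pm) + (if b j = v then 1 - pm else pm))"
    using assms(3) v unfolding QQ_def hh_def by (cases "a j"; cases "b j"; cases v; simp add: field_simps)
  show "pm \<le> QQ d H pm a b j" unfolding Q using assms by auto
  show "matches d H a \<or> matches d H b \<Longrightarrow> 1/2 \<le> QQ d H pm a b j"
    unfolding Q using assms v by (auto simp: matches_def)
  show "matches d H a \<Longrightarrow> matches d H b \<Longrightarrow> 1 - pm \<le> QQ d H pm a b j"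
    unfolding Q using assms v by (auto simp: matches_def)
qed

lemma PP_Fx: "PP d H pm a b = (\<Prod>j\<in>fixed_pos d H. QQ d H pm a b j)"
proof -
  have "PP d H pm a b = (\<Prod>j\<in>{..<d}. QQ d H pm a b j)" unfolding PP_eq QQ_def ..
  also have "\<dots> = (\<Prod>j\<in>{..<d}. if j \<in> fixed_pos d H then QQ d H pm a b j else 1)"
    by (rule prod.cong) (auto simp: QQ_out)
  also have "\<dots> = (\<Prod>j\<in>{..<d} \<inter> fixed_pos d H. QQ d H pm a b j)"
    by (rule prod.inter_restrict[symmetric]) simp
  also have "{..<d} \<inter> fixed_pos d H = fixed_pos d H" unfolding fixed_pos_def by auto
  finally show ?thesis .
qed

lemma PP_ge_const:
  assumes "0 \<le> c" "\<And>j. j \<in> fixed_pos d H \<Longrightarrow> c \<le> QQ d H pm a b j"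
  shows "c ^ ord_schema d H \<le> PP d H pm a b"
proof -
  have "c ^ ord_schema d H = (\<Prod>j\<in>fixed_pos d H. c)" unfolding ord_schema_def by simp
  also have "\<dots> \<le> (\<Prod>j\<in>fixed_pos d H. QQ d H pm a b j)"
    by (rule prod_mono) (use assms in auto)
  finally show ?thesis unfolding PP_Fx .
qed

lemma PP_lower:
  assumes "0 < pm" "pm \<le> 1/2"
  shows "(if matches d H a \<and> matches d H b then (1-pm)^ord_schema d H
          else if matches d H a \<or> matches d H b then (1/2)^ord_schema d H
          else pm^ord_schema d H) \<le> PP d H pm a b"
  using assms by (auto intro!: PP_ge_const QQ_bounds)


theorem corollary3p4:
  fixes d K :: nat and pm :: real and f :: "(nat \<Rightarrow> bool) \<Rightarrow> real"
    and u :: "nat \<Rightarrow> nat \<Rightarrow> bool" and H :: "nat \<Rightarrow> bool option"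
  assumes "K \<ge> 1" and "0 < pm" and "pm \<le> 1/2"
  shows "alpha d pm f K u H \<ge>
     (1 - pm) ^ ord_schema d H * (alpha_sel d f K u H)\<^sup>2
     + (1/2) ^ ord_schema d H * alpha_sel d f K u H * (1 - alpha_sel d f K u H)
     + (1 - alpha_sel d f K u H)\<^sup>2 * pm ^ ord_schema d H"
proof -
  define w where "w k = sel_weight f K u k" for k
  define m where "m k = matches d H (u k)" for k
  define i where "i k = (if m k then 1 else 0::real)" for k
  define c1 where "c1 = (1 - pm) ^ ord_schema d H"
  define c2 where "c2 = (1/2::real) ^ ord_schema d H"
  define c3 where "c3 = pm ^ ord_schema d H"
  define A where "A = alpha_sel d f K u H"
  have w0: "w k \<ge> 0" for k unfolding w_def sel_weight_def
    by (intro divide_nonneg_nonneg sum_nonneg) auto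
  have den: "(\<Sum>i<K. exp (f (u i) / 2)) > 0"
    using assms(1) by (intro sum_pos) (auto simp: lessThan_empty_iff)
  have wsum: "(\<Sum>k<K. w k) = 1"
    unfolding w_def sel_weight_def sum_divide_distrib[symmetric] using den by simp
  have A_eq: "A = (\<Sum>k<K. w k * i k)"
  proof -
    have "(\<Sum>k<K. w k * i k) = (\<Sum>k<K. if k \<in> {k. m k} then w k else 0)"
      by (rule sum.cong) (auto simp: i_def)
    also have "\<dots> = (\<Sum>k\<in>{..<K} \<inter> {k. m k}. w k)"
      by (rule sum.inter_restrict[symmetric]) simp
    also have "{..<K} \<inter> {k. m k} = {k. k < K \<and> matches d H (u k)}" by (auto simp: m_def)
    finally show ?thesis unfolding A_def alpha_sel_def w_def by simp
  qed
  have B_eq: "1 - A = (\<Sum>k<K. w k * (1 - i k))"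
    unfolding A_eq using wsum by (simp add: algebra_simps sum_subtractf)
  have A0: "A \<ge> 0" unfolding A_eq using w0 by (intro sum_nonneg) (auto simp: i_def)
  have B0: "1 - A \<ge> 0" unfolding B_eq using w0 by (intro sum_nonneg) (auto simp: i_def)
  define L where "L k l = c1 * (i k * i l) + c2 * (i k * (1 - i l) + (1 - i k) * i l)
       + c3 * ((1 - i k) * (1 - i l))" for k l
  have PL: "L k l \<le> PP d H pm (u k) (u l)" for k l
    using PP_lower[OF assms(2,3), of d H "u k" "u l"]
    by (auto simp: L_def i_def m_def c1_def c2_def c3_def)
  have "alpha d pm f K u H = (\<Sum>k<K. \<Sum>l<K. w k * w l * PP d H pm (u k) (u l))"
    unfolding alpha_def PP_def w_def ..
  also have "\<dots> \<ge> (\<Sum>k<K. \<Sum>l<K. w k * w l * L k l)"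
    by (intro sum_mono mult_left_mono PL) (simp add: w0)
  finally have ge: "alpha d pm f K u H \<ge> (\<Sum>k<K. \<Sum>l<K. w k * w l * L k l)" .
  have prodsum: "(\<Sum>k<K. \<Sum>l<K. w k * w l * (g k * h l)) = (\<Sum>k<K. w k * g k) * (\<Sum>l<K. w l * h l)"
    for g h :: "nat \<Rightarrow> real"
    by (simp add: sum_product algebra_simps)
  have "(\<Sum>k<K. \<Sum>l<K. w k * w l * L k l) =
      c1 * (\<Sum>k<K. \<Sum>l<K. w k * w l * (i k * i l))
      + c2 * (\<Sum>k<K. \<Sum>l<K. w k * w l * (i k * (1 - i l)))
      + c2 * (\<Sum>k<K. \<Sum>l<K. w k * w l * ((1 - i k) * i l))
      + c3 * (\<Sum>k<K. \<Sum>l<K. w k * w l * ((1 - i k) * (1 - i l)))"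
  proof -
    have "(\<Sum>k<K. \<Sum>l<K. w k * w l * L k l) = (\<Sum>k<K. \<Sum>l<K.
       c1 * (w k * w l * (i k * i l)) + c2 * (w k * w l * (i k * (1 - i l)))
      + c2 * (w k * w l * ((1 - i k) * i l)) + c3 * (w k * w l * ((1 - i k) * (1 - i l))))"
      by (intro sum.cong refl) (simp only: L_def distrib_left mult.assoc mult.left_commute add.assoc)
    then show ?thesis by (simp only: sum.distrib sum_distrib_left)
  qed
  also have "\<dots> = c1 * A^2 + 2 * c2 * A * (1 - A) + c3 * (1 - A)^2"
    unfolding prodsum A_eq[symmetric] B_eq[symmetric] by (simp add: power2_eq_square algebra_simps)
  finally have eq: "(\<Sum>k<K. \<Sum>l<K. w k * w l * L k l) = c1 * A^2 + 2 * c2 * A * (1 - A) + c3 * (1 - A)^2" .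
  have "c2 * A * (1 - A) \<ge> 0" using A0 B0 unfolding c2_def by simp
  then show ?thesis using ge eq unfolding A_def[symmetric] c1_def c2_def c3_def
    by (simp add: algebra_simps)
qed

end
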